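(* Let $\phi:\langle S\mid R\rangle\to\mathbb{Z}^n$ be an isomorphism where $\langle S\mid R\rangle$ is a 3-presentation, let $S'\subseteq S$, and let $d=\dim S'$. Then there exist words $w_1,\dots,w_d$ in the free group on $S$ such that, letting $R''$ consist of the words obtained from each element of $R\cup\{w_1,\dots,w_d\}$ by deleting every occurrence of every generator in $S'$, we have $\langle S\setminus S'\mid R''\rangle\cong\mathbb{Z}^{n-d}$ (and $|R''|=|R|+d$).
   Context: A 3-presentation of a group $G$ is a group presentation $\langle S\mid R\rangle\cong G$ (with $S,R$ finite) in which each relation is the empty word, $g^a$, $g^ah^b$, or $g^ah^bi^c$ with $g,h,i\in S$ and $a,b,c\in\mathbb{Z}$. For $S'\subseteq S$, $\dim S'=\dim\operatorname{span}_{\mathbb{R}}\{\phi(g):g\in S'\}$, viewing $\phi(g)\in\mathbb{Z}^n\subseteq\mathbb{R}^n$. *)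

theory Defs
  imports "HOL-Algebra.Algebra" "HOL-Library.Function_Algebras"
begin

text \<open>Words in the free group on generators of type 'a are lists of syllables
  (g, a), standing for g to the power a (a an integer).\<close>

type_synonym 'a word = "('a \<times> int) list"

definition word_on :: "'a set \<Rightarrow> 'a word \<Rightarrow> bool" where
  "word_on S w \<longleftrightarrow> fst ` set w \<subseteq> S"

inductive pres_eq :: "'a set \<Rightarrow> 'a word set \<Rightarrow> 'a word \<Rightarrow> 'a word \<Rightarrow> bool"
  for S :: "'a set" and R :: "'a word set" where
  zero: "\<lbrakk>word_on S u; word_on S v; g \<in> S\<rbrakk> \<Longrightarrow> pres_eq S R (u @ [(g, 0)] @ v) (u @ v)"
| merge: "\<lbrakk>word_on S u; word_on S v; g \<in> S\<rbrakk> \<Longrightarrow>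
           pres_eq S R (u @ [(g, a), (g, b)] @ v) (u @ [(g, a + b)] @ v)"
| rel: "\<lbrakk>word_on S u; word_on S v; r \<in> R; word_on S r\<rbrakk> \<Longrightarrow> pres_eq S R (u @ r @ v) (u @ v)"
| refl: "word_on S u \<Longrightarrow> pres_eq S R u u"
| sym: "pres_eq S R u v \<Longrightarrow> pres_eq S R v u"
| trans: "pres_eq S R u v \<Longrightarrow> pres_eq S R v w \<Longrightarrow> pres_eq S R u w"

definition pclass :: "'a set \<Rightarrow> 'a word set \<Rightarrow> 'a word \<Rightarrow> 'a word set" where
  "pclass S R w = {v. pres_eq S R w v}"

definition presented_group :: "'a set \<Rightarrow> 'a word set \<Rightarrow> 'a word set monoid" where
  "presented_group S R =
     \<lparr>carrier = pclass S R ` {w. word_on S w},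
      monoid.mult = (\<lambda>A B. \<Union>w\<in>A. \<Union>v\<in>B. pclass S R (w @ v)),
      one = pclass S R []\<rparr>"

definition gen :: "'a set \<Rightarrow> 'a word set \<Rightarrow> 'a \<Rightarrow> 'a word set" where
  "gen S R g = pclass S R [(g, 1)]"

text \<open>3-presentation: S, R finite, every relator is a word over S of the form
  empty, g^a, g^a h^b or g^a h^b i^c, i.e. has at most 3 syllables.
  Relators are given as a list (so |R| counts them with multiplicity).\<close>

definition three_presentation :: "'a set \<Rightarrow> 'a word list \<Rightarrow> bool" where
  "three_presentation S R \<longleftrightarrow> finite S \<and> (\<forall>r\<in>set R. word_on S r \<and> length r \<le> 3)"

definition Zn :: "nat \<Rightarrow> (nat \<Rightarrow> int) monoid" where
  "Zn n = \<lparr>carrier = {v. \<forall>i\<ge>n. v i = 0}, monoid.mult = (\<lambda>u v i. u i + v i), one = (\<lambda>i. 0)\<rparr>"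

definition gen_dim :: "'a set \<Rightarrow> 'a word set \<Rightarrow> ('a word set \<Rightarrow> (nat \<Rightarrow> int)) \<Rightarrow> 'a set \<Rightarrow> nat" where
  "gen_dim S R \<phi> S' =
     vector_space.dim (\<lambda>(c::real) (v::nat \<Rightarrow> real) i. c * v i)
       ((\<lambda>g i. real_of_int (\<phi> (gen S R g) i)) ` S')"

definition delete_gens :: "'a set \<Rightarrow> 'a word \<Rightarrow> 'a word" where
  "delete_gens S' w = filter (\<lambda>x. fst x \<notin> S') w"

end

theory Submission
  imports Defs
begin


lemma pres_eq_words: "pres_eq S R u v \<Longrightarrow> word_on S u \<and> word_on S v"
  by (induction rule: pres_eq.induct) (auto simp: word_on_def)

lemma word_on_append[simp]: "word_on S (u @ v) \<longleftrightarrow> word_on S u \<and> word_on S v"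
  by (auto simp: word_on_def)
lemma word_on_Nil[simp]: "word_on S []" by (simp add: word_on_def)
lemma word_on_Cons[simp]: "word_on S (x # v) \<longleftrightarrow> fst x \<in> S \<and> word_on S v"
  by (auto simp: word_on_def)

lemma pres_eq_app_right: "pres_eq S R u v \<Longrightarrow> word_on S w \<Longrightarrow> pres_eq S R (u @ w) (v @ w)"
proof (induction rule: pres_eq.induct)
  case (zero u v g) thus ?case using pres_eq.zero[of S u "v@w" g R] by simp
next
  case (merge u v g a b) thus ?case using pres_eq.merge[of S u "v@w" g R a b] by simp
next
  case (rel u v r) thus ?case using pres_eq.rel[of S u "v@w" r R] by simp
next
  case (refl u) thus ?case by (simp add: pres_eq.refl)
next
  case (sym u v) thus ?case by (blast intro: pres_eq.sym)
next
  case (trans u v w') thus ?case by (blast intro: pres_eq.trans)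
qed

lemma pres_eq_app_left: "pres_eq S R u v \<Longrightarrow> word_on S w \<Longrightarrow> pres_eq S R (w @ u) (w @ v)"
proof (induction rule: pres_eq.induct)
  case (zero u v g) thus ?case using pres_eq.zero[of S "w@u" v g R] by simp
next
  case (merge u v g a b) thus ?case using pres_eq.merge[of S "w@u" v g R a b] by simp
next
  case (rel u v r) thus ?case using pres_eq.rel[of S "w@u" v r R] by simp
next
  case (refl u) thus ?case by (simp add: pres_eq.refl)
next
  case (sym u v) thus ?case by (blast intro: pres_eq.sym)
next
  case (trans u v w') thus ?case by (blast intro: pres_eq.trans)
qed

lemma pres_eq_app: "pres_eq S R u v \<Longrightarrow> pres_eq S R u' v' \<Longrightarrow> pres_eq S R (u @ u') (v @ v')"
  by (meson pres_eq.trans pres_eq_app_left pres_eq_app_right pres_eq_words)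

lemma pres_eq_mono: "pres_eq S R u v \<Longrightarrow> R \<subseteq> R' \<Longrightarrow> pres_eq S R' u v"
  by (induction rule: pres_eq.induct) (auto intro: pres_eq.intros[simplified])

lemma pclass_eq_iff: "word_on S u \<Longrightarrow> pclass S R u = pclass S R v \<longleftrightarrow> pres_eq S R u v"
proof
  assume w: "word_on S u" and e: "pclass S R u = pclass S R v"
  have "u \<in> pclass S R u" using w by (simp add: pclass_def pres_eq.refl)
  hence "pres_eq S R v u" using e unfolding pclass_def by blast
  thus "pres_eq S R u v" by (rule pres_eq.sym)
next
  assume "pres_eq S R u v"
  thus "pclass S R u = pclass S R v" unfolding pclass_def
    by (blast intro: pres_eq.sym pres_eq.trans)
qed

lemma pclass_mult:
  assumes "word_on S u" "word_on S v"
  shows "monoid.mult (presented_group S R) (pclass S R u) (pclass S R v) = pclass S R (u @ v)"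
proof -
  have "pclass S R (w @ w') = pclass S R (u @ v)" if "w \<in> pclass S R u" "w' \<in> pclass S R v" for w w'
  proof -
    have "pres_eq S R u w" "pres_eq S R v w'" using that by (auto simp: pclass_def)
    hence "pres_eq S R (u@v) (w@w')" by (rule pres_eq_app)
    thus ?thesis using assms pclass_eq_iff[of S "u@v" R "w@w'"] by simp
  qed
  moreover have "u \<in> pclass S R u" "v \<in> pclass S R v"
    using assms by (auto simp: pclass_def intro: pres_eq.refl)
  ultimately show ?thesis unfolding presented_group_def monoid.select_convs
    by (intro equalityI subsetI; blast)
qed

lemma pclass_carrier: "word_on S u \<Longrightarrow> pclass S R u \<in> carrier (presented_group S R)"
  by (simp add: presented_group_def)

lemma del_append[simp]: "delete_gens S' (u @ v) = delete_gens S' u @ delete_gens S' v"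
  by (simp add: delete_gens_def)
lemma del_Nil[simp]: "delete_gens S' [] = []" by (simp add: delete_gens_def)
lemma del_Cons: "delete_gens S' (x # v) = (if fst x \<in> S' then delete_gens S' v else x # delete_gens S' v)"
  by (simp add: delete_gens_def)
lemma del_word_on: "word_on S u \<Longrightarrow> word_on (S - S') (delete_gens S' u)"
  by (auto simp: word_on_def delete_gens_def)
lemma del_id: "word_on (S - S') u \<Longrightarrow> delete_gens S' u = u"
  by (auto simp: word_on_def delete_gens_def intro!: filter_True)

lemma pres_eq_del:
  "pres_eq S R u v \<Longrightarrow> pres_eq (S - S') (delete_gens S' ` R) (delete_gens S' u) (delete_gens S' v)"
proof (induction rule: pres_eq.induct)
  case (zero u v g)
  show ?case
  proof (cases "g \<in> S'")
    case True thus ?thesis using zero by (auto simp: del_Cons intro!: pres_eq.refl del_word_on)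
  next
    case False thus ?thesis using zero pres_eq.zero[of "S-S'" "delete_gens S' u" "delete_gens S' v" g]
      by (auto simp: del_Cons intro: del_word_on)
  qed
next
  case (merge u v g a b)
  show ?case
  proof (cases "g \<in> S'")
    case True thus ?thesis using merge by (auto simp: del_Cons intro!: pres_eq.refl del_word_on)
  next
    case False thus ?thesis using merge pres_eq.merge[of "S-S'" "delete_gens S' u" "delete_gens S' v" g]
      by (auto simp: del_Cons intro: del_word_on)
  qed
next
  case (rel u v r)
  thus ?case using pres_eq.rel[of "S-S'" "delete_gens S' u" "delete_gens S' v" "delete_gens S' r"]
    by (auto intro: del_word_on)
next
  case (refl u) thus ?case by (simp add: pres_eq.refl del_word_on)
next
  case (sym u v) thus ?case by (blast intro: pres_eq.sym)
next
  case (trans u v w') thus ?case by (blast intro: pres_eq.trans)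
qed

definition winv :: "'a word \<Rightarrow> 'a word" where
  "winv w = rev (map (\<lambda>(g,a). (g, -a)) w)"

lemma winv_Nil[simp]: "winv [] = []" by (simp add: winv_def)
lemma winv_Cons[simp]: "winv ((g,a) # w) = winv w @ [(g,-a)]" by (simp add: winv_def)
lemma winv_append[simp]: "winv (u @ w) = winv w @ winv u" by (simp add: winv_def)
lemma winv_word_on[simp]: "word_on S (winv w) \<longleftrightarrow> word_on S w"
  by (induction w) auto
lemma del_winv: "delete_gens S' (winv w) = winv (delete_gens S' w)"
  by (induction w) (auto simp: winv_def del_Cons)

lemma winv_cancel: "word_on S w \<Longrightarrow> pres_eq S R (winv w @ w) []"
proof (induction w)
  case Nil thus ?case by (simp add: pres_eq.refl)
next
  case (Cons x w)
  obtain g a where x: "x = (g,a)" by fastforce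
  have g: "g \<in> S" "word_on S w" using Cons x by auto
  have "winv (x # w) @ x # w = winv w @ [(g,-a),(g,a)] @ w" by (simp add: winv_def x)
  moreover have "pres_eq S R (winv w @ [(g,-a),(g,a)] @ w) (winv w @ [(g,0)] @ w)"
    using pres_eq.merge[of S "winv w" w g R "-a" a] g by simp
  moreover have "pres_eq S R (winv w @ [(g,0)] @ w) (winv w @ w)"
    using pres_eq.zero[of S "winv w" w g R] g by simp
  ultimately show ?case using Cons g by (metis pres_eq.trans)
qed

lemma rel_trivial: "r \<in> R \<Longrightarrow> word_on S r \<Longrightarrow> pres_eq S R r []"
  using pres_eq.rel[of S "[]" "[]" r R] by simp

lemma rel_inv_trivial: "r \<in> R \<Longrightarrow> word_on S r \<Longrightarrow> pres_eq S R (winv r) []"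
proof -
  assume a: "r \<in> R" "word_on S r"
  have "pres_eq S R (winv r) (winv r @ r)"
    using pres_eq_app_left[OF rel_trivial[OF a], of "winv r"] a by (simp add: pres_eq.sym)
  thus ?thesis using winv_cancel[OF a(2)] pres_eq.trans by blast
qed



definition vec :: "nat \<Rightarrow> (nat \<Rightarrow> int) \<Rightarrow> bool" where
  "vec n x \<longleftrightarrow> (\<forall>i\<ge>n. x i = 0)"

definition smul :: "int \<Rightarrow> (nat \<Rightarrow> int) \<Rightarrow> (nat \<Rightarrow> int)" where
  "smul c x = (\<lambda>i. c * x i)"

definition ev :: "('a \<Rightarrow> nat \<Rightarrow> int) \<Rightarrow> 'a word \<Rightarrow> nat \<Rightarrow> int" where
  "ev h w = sum_list (map (\<lambda>(g,a). smul a (h g)) w)"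

lemma ev_nil[simp]: "ev h [] = 0" by (simp add: ev_def)
lemma ev_cons[simp]: "ev h ((g,a) # w) = smul a (h g) + ev h w" by (simp add: ev_def)

lemma ev_append[simp]: "ev h (u @ v) = ev h u + ev h v"
  by (simp add: ev_def)

lemma smul_neg: "smul (-a) x = - smul a x"
  by (auto simp: smul_def fun_eq_iff)

lemma ev_winv: "ev h (winv w) = - ev h w"
  by (induction w) (auto simp: smul_neg)

lemma ev_del: "(\<And>g. g \<in> S' \<Longrightarrow> h g = 0) \<Longrightarrow> ev h (delete_gens S' w) = ev h w"
  by (induction w) (auto simp: del_Cons smul_def)

lemma carrier_Zn: "carrier (Zn n) = {x. vec n x}"
  by (simp add: Zn_def vec_def)

lemma mult_Zn: "monoid.mult (Zn n) x y = x + y"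
  by (simp add: Zn_def fun_eq_iff)

lemma vec_add: "vec n x \<Longrightarrow> vec n y \<Longrightarrow> vec n (x + y)" by (simp add: vec_def)
lemma vec_zero[simp]: "vec n 0" by (simp add: vec_def)
lemma vec_smul: "vec n x \<Longrightarrow> vec n (smul c x)" by (simp add: vec_def smul_def)
lemma vec_neg: "vec n x \<Longrightarrow> vec n (- x)" by (simp add: vec_def)
lemma vec_diff: "vec n x \<Longrightarrow> vec n y \<Longrightarrow> vec n (x - y)" by (simp add: vec_def)

lemma ev_vec: "(\<And>g. vec n (h g)) \<Longrightarrow> vec n (ev h w)"
  by (induction w) (auto intro!: vec_add vec_smul)

lemma ev_vec_on: "word_on S w \<Longrightarrow> (\<And>g. g \<in> S \<Longrightarrow> vec n (h g)) \<Longrightarrow> vec n (ev h w)"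
  by (induction w) (auto intro!: vec_add vec_smul)

context
  fixes S :: "'a set" and R :: "'a word set" and \<phi> and n
  assumes hom: "\<phi> \<in> hom (presented_group S R) (Zn n)"
begin

lemma phi_app: "word_on S u \<Longrightarrow> word_on S v \<Longrightarrow>
  \<phi> (pclass S R (u @ v)) = \<phi> (pclass S R u) + \<phi> (pclass S R v)"
proof -
  assume a: "word_on S u" "word_on S v"
  have "\<forall>x\<in>carrier (presented_group S R). \<forall>y\<in>carrier (presented_group S R).
     \<phi> (x \<otimes>\<^bsub>presented_group S R\<^esub> y) = \<phi> x + \<phi> y"
    using hom by (simp add: hom_def mult_Zn)
  thus ?thesis using pclass_mult[OF a, of R] pclass_carrier[OF a(1), of R] pclass_carrier[OF a(2), of R]
    by metis
qed

lemma phi_nil: "\<phi> (pclass S R []) = 0"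
  using phi_app[of "[]" "[]"] by simp

lemma phi_vec: "word_on S u \<Longrightarrow> vec n (\<phi> (pclass S R u))"
  using hom pclass_carrier[of S u R] by (auto simp: hom_def carrier_Zn)

lemma phi_syll: assumes g: "g \<in> S" shows "\<phi> (pclass S R [(g,a)]) = smul a (\<phi> (gen S R g))"
proof (induction a rule: int_induct[where k=0])
  case base
  have "pclass S R [(g,0)] = pclass S R []"
    using pclass_eq_iff[of S "[(g,0)]" R "[]"] pres_eq.zero[of S "[]" "[]" g R] g by simp
  thus ?case by (simp add: phi_nil smul_def fun_eq_iff)
next
  case (step1 i)
  have "pclass S R [(g,i),(g,1)] = pclass S R [(g,i+1)]"
    using pclass_eq_iff[of S "[(g,i),(g,1)]" R] pres_eq.merge[of S "[]" "[]" g R i 1] g by simp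
  hence "\<phi> (pclass S R [(g,i+1)]) = \<phi> (pclass S R [(g,i)]) + \<phi> (pclass S R [(g,1)])"
    using phi_app[of "[(g,i)]" "[(g,1)]"] g by simp
  thus ?case using step1 by (simp add: gen_def smul_def fun_eq_iff algebra_simps)
next
  case (step2 i)
  have "pclass S R [(g,i - 1),(g,1)] = pclass S R [(g,i)]"
    using pclass_eq_iff[of S "[(g,i - 1),(g,1)]" R] pres_eq.merge[of S "[]" "[]" g R "i - 1" 1] g by simp
  hence "\<phi> (pclass S R [(g,i)]) = \<phi> (pclass S R [(g,i - 1)]) + \<phi> (pclass S R [(g,1)])"
    using phi_app[of "[(g,i - 1)]" "[(g,1)]"] g by simp
  thus ?case using step2 by (simp add: gen_def smul_def fun_eq_iff algebra_simps)
qed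

lemma phi_ev: "word_on S w \<Longrightarrow> \<phi> (pclass S R w) = ev (\<lambda>g. \<phi> (gen S R g)) w"
proof (induction w)
  case Nil thus ?case by (simp add: phi_nil)
next
  case (Cons x w)
  obtain g a where x: "x = (g,a)" by fastforce
  have "\<phi> (pclass S R ([(g,a)] @ w)) = \<phi> (pclass S R [(g,a)]) + \<phi> (pclass S R w)"
    using Cons x by (intro phi_app) auto
  thus ?case using Cons x phi_syll[of g a] by simp
qed

end


definition lin :: "nat \<Rightarrow> nat \<Rightarrow> ((nat \<Rightarrow> int) \<Rightarrow> (nat \<Rightarrow> int)) \<Rightarrow> bool" where
  "lin n m f \<longleftrightarrow> (\<forall>x. vec n x \<longrightarrow> vec m (f x)) \<and> (\<forall>x y. vec n x \<longrightarrow> vec n y \<longrightarrow> f (x + y) = f x + f y)"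

definition ee :: "nat \<Rightarrow> nat \<Rightarrow> int" where "ee j = (\<lambda>i. if i = j then 1 else 0)"

lemma lin_vec: "lin n m f \<Longrightarrow> vec n x \<Longrightarrow> vec m (f x)" by (simp add: lin_def)
lemma lin_add: "lin n m f \<Longrightarrow> vec n x \<Longrightarrow> vec n y \<Longrightarrow> f (x + y) = f x + f y" by (simp add: lin_def)
lemma lin_zero: "lin n m f \<Longrightarrow> f 0 = 0"
  using lin_add[of n m f 0 0] by simp
lemma lin_neg: "lin n m f \<Longrightarrow> vec n x \<Longrightarrow> f (- x) = - f x"
  using lin_add[of n m f x "-x"] lin_zero[of n m f] by (simp add: vec_neg eq_neg_iff_add_eq_0 add.commute)
lemma lin_diff: "lin n m f \<Longrightarrow> vec n x \<Longrightarrow> vec n y \<Longrightarrow> f (x - y) = f x - f y"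
  using lin_add[of n m f x "-y"] lin_neg[of n m f y] by (simp add: vec_neg)

lemma smul_plus1: "smul (c + 1) x = smul c x + x" by (simp add: smul_def fun_eq_iff algebra_simps)
lemma smul_minus1: "smul (c - 1) x = smul c x - x" by (simp add: smul_def fun_eq_iff algebra_simps)

lemma lin_smul: assumes "lin n m f" "vec n x" shows "f (smul c x) = smul c (f x)"
proof (induction c rule: int_induct[where k=0])
  case base thus ?case using lin_zero[OF assms(1)] by (simp add: smul_def fun_eq_iff zero_fun_def)
next
  case (step1 i) thus ?case
    unfolding smul_plus1 lin_add[OF assms(1) vec_smul[OF assms(2)] assms(2)] by simp
next
  case (step2 i) thus ?case
    unfolding smul_minus1 lin_diff[OF assms(1) vec_smul[OF assms(2)] assms(2)] by simp
qed

lemma lin_comp: "lin n m f \<Longrightarrow> lin m k g \<Longrightarrow> lin n k (g \<circ> f)"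
  by (simp add: lin_def)

lemma vec_ee: "j < m \<Longrightarrow> vec m (ee j)" by (simp add: vec_def ee_def)

definition prim :: "nat \<Rightarrow> (nat \<Rightarrow> int) \<Rightarrow> bool" where
  "prim m u \<longleftrightarrow> vec m u \<and> (\<forall>c. (\<forall>i. c dvd u i) \<longrightarrow> is_unit c)"

definition good :: "nat \<Rightarrow> ((nat \<Rightarrow> int) \<Rightarrow> (nat \<Rightarrow> int)) \<Rightarrow> bool" where
  "good m U \<longleftrightarrow> lin m m U \<and> bij_betw U {x. vec m x} {x. vec m x}"

lemma good_comp: "good m f \<Longrightarrow> good m g \<Longrightarrow> good m (g \<circ> f)"
  unfolding good_def using lin_comp bij_betw_trans by blast

lemma good_invol: assumes "lin m m f" "\<And>x. vec m x \<Longrightarrow> f (f x) = x" shows "good m f"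
  unfolding good_def using assms
  by (intro conjI bij_betwI[where g=f]) (auto simp: lin_def)

definition addm :: "nat \<Rightarrow> nat \<Rightarrow> int \<Rightarrow> (nat \<Rightarrow> int) \<Rightarrow> (nat \<Rightarrow> int)" where
  "addm i j c x = x(i := x i + c * x j)"

lemma good_addm: assumes "i < m" "j < m" "i \<noteq> j" shows "good m (addm i j c)"
proof -
  have l: "lin m m (addm i j d)" for d using assms
    by (auto simp: lin_def addm_def vec_def algebra_simps)
  show ?thesis unfolding good_def
    apply (intro conjI l bij_betwI[where g="addm i j (-c)"])
    using l[of c] l[of "-c"] assms by (auto simp: lin_def addm_def fun_eq_iff)
qed

definition swp :: "nat \<Rightarrow> nat \<Rightarrow> (nat \<Rightarrow> int) \<Rightarrow> (nat \<Rightarrow> int)" where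
  "swp i j x = (\<lambda>k. x (if k = i then j else if k = j then i else k))"

lemma good_swp: assumes "i < m" "j < m" shows "good m (swp i j)"
  using assms by (intro good_invol) (auto simp: lin_def swp_def vec_def fun_eq_iff)

definition ng :: "nat \<Rightarrow> (nat \<Rightarrow> int) \<Rightarrow> (nat \<Rightarrow> int)" where
  "ng i x = x(i := - x i)"

lemma good_ng: assumes "i < m" shows "good m (ng i)"
  using assms by (intro good_invol) (auto simp: lin_def ng_def vec_def fun_eq_iff)

lemma good_id: "good m id"
  by (intro good_invol) (auto simp: lin_def)

lemma prim_exists_nz: assumes "prim m u" obtains i where "i < m" "u i \<noteq> 0"
proof -
  have "\<not> is_unit (2::int)" by simp
  hence "\<exists>i. \<not> (2::int) dvd u i" using assms by (auto simp: prim_def)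
  then obtain i where "\<not> (2::int) dvd u i" by blast
  hence "u i \<noteq> 0" by auto
  moreover have "i < m" using assms \<open>u i \<noteq> 0\<close> by (auto simp: prim_def vec_def not_less)
  ultimately show ?thesis using that by blast
qed

lemma prim_reduce:
  assumes "prim m u"
  shows "\<exists>U. good m U \<and> U u = ee 0"
  using assms
proof (induction "\<Sum>i<m. nat \<bar>u i\<bar>" arbitrary: u rule: less_induct)
  case less
  show ?case
  proof (cases "\<exists>i j. i < m \<and> j < m \<and> i \<noteq> j \<and> u i \<noteq> 0 \<and> u j \<noteq> 0 \<and> \<bar>u j\<bar> \<le> \<bar>u i\<bar>")
    case True
    then obtain i j where ij: "i < m" "j < m" "i \<noteq> j" "u i \<noteq> 0" "u j \<noteq> 0" "\<bar>u j\<bar> \<le> \<bar>u i\<bar>" by blast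
    define c where "c = - (sgn (u i) * sgn (u j))"
    define u' where "u' = addm i j c u"
    have ui': "u' i = u i - sgn (u i) * \<bar>u j\<bar>"
      by (simp add: u'_def addm_def c_def abs_sgn algebra_simps)
    have abs': "\<bar>u' i\<bar> = \<bar>u i\<bar> - \<bar>u j\<bar>"
      using ij unfolding ui' by (cases "u i > 0") (auto simp: sgn_if)
    have other: "k \<noteq> i \<Longrightarrow> u' k = u k" for k by (simp add: u'_def addm_def)
    have "(\<Sum>k<m. nat \<bar>u' k\<bar>) < (\<Sum>k<m. nat \<bar>u k\<bar>)"
    proof -
      have "(\<Sum>k<m. nat \<bar>u' k\<bar>) = nat \<bar>u' i\<bar> + (\<Sum>k\<in>{..<m}-{i}. nat \<bar>u' k\<bar>)"
        using ij by (simp add: sum.remove)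
      also have "(\<Sum>k\<in>{..<m}-{i}. nat \<bar>u' k\<bar>) = (\<Sum>k\<in>{..<m}-{i}. nat \<bar>u k\<bar>)"
        by (intro sum.cong) (auto simp: other)
      also have "(\<Sum>k<m. nat \<bar>u k\<bar>) = nat \<bar>u i\<bar> + (\<Sum>k\<in>{..<m}-{i}. nat \<bar>u k\<bar>)"
        using ij by (simp add: sum.remove)
      moreover have "nat \<bar>u' i\<bar> < nat \<bar>u i\<bar>" using abs' ij by simp
      ultimately show ?thesis by simp
    qed
    moreover have "prim m u'"
    proof -
      have "vec m u'" using less.prems ij by (auto simp: prim_def vec_def u'_def addm_def)
      moreover have "is_unit d" if d: "\<forall>k. d dvd u' k" for d
      proof -
        have "d dvd u j" using d other[of j] ij by metis
        moreover have "u i = u' i - c * u j" by (simp add: u'_def addm_def)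
        ultimately have "d dvd u i" using d by (metis dvd_diff dvd_mult)
        hence "\<forall>k. d dvd u k" using d other by metis
        thus ?thesis using less.prems by (auto simp: prim_def)
      qed
      ultimately show ?thesis by (simp add: prim_def)
    qed
    ultimately obtain U' where U': "good m U'" "U' u' = ee 0" using less.hyps by blast
    have "good m (U' \<circ> addm i j c)" using good_comp[OF good_addm[OF ij(1-3)] U'(1)] .
    thus ?thesis using U' by (auto simp: u'_def)
  next
    case False
    obtain i where i: "i < m" "u i \<noteq> 0" using prim_exists_nz[OF less.prems] by blast
    have zero: "u k = 0" if "k \<noteq> i" for k
    proof (rule ccontr)
      assume nz: "u k \<noteq> 0"
      have "k < m" using less.prems nz by (auto simp: prim_def vec_def not_less)
      thus False using False i nz that by (cases "\<bar>u k\<bar> \<le> \<bar>u i\<bar>") force+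
    qed
    have "\<forall>k. u i dvd u k" using zero by (metis dvd_0_right dvd_refl)
    hence "is_unit (u i)" using less.prems by (auto simp: prim_def)
    hence ui: "u i = 1 \<or> u i = -1" using zdvd1_eq by auto
    define N where "N = (if u i = 1 then id else ng i)"
    have gN: "good m N" using good_id good_ng[OF i(1)] by (simp add: N_def)
    have "N u = ee i" using ui zero by (auto simp: N_def ng_def ee_def fun_eq_iff)
    moreover have "swp 0 i (ee i) = ee 0" by (auto simp: swp_def ee_def fun_eq_iff)
    moreover have "good m (swp 0 i \<circ> N)" using good_comp[OF gN good_swp[of 0 m i]] i by simp
    ultimately show ?thesis by (metis comp_apply)
  qed
qed



inductive_set zs :: "(nat \<Rightarrow> int) set \<Rightarrow> (nat \<Rightarrow> int) set" for B where
  z0: "0 \<in> zs B"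
| zp: "x \<in> zs B \<Longrightarrow> b \<in> B \<Longrightarrow> x + b \<in> zs B"
| zm: "x \<in> zs B \<Longrightarrow> b \<in> B \<Longrightarrow> x - b \<in> zs B"

lemma zs_zero: "0 \<in> zs B" using zs.z0 by (simp add: zero_fun_def)
lemma zs_add: "x \<in> zs B \<Longrightarrow> b \<in> B \<Longrightarrow> x + b \<in> zs B" using zs.zp by (simp add: plus_fun_def)
lemma zs_sub: "x \<in> zs B \<Longrightarrow> b \<in> B \<Longrightarrow> x - b \<in> zs B" using zs.zm by (simp add: fun_diff_def)

lemma zs_induct[consumes 1, case_names z0 zp zm]:
  assumes "x \<in> zs B" "P 0" "\<And>x b. x \<in> zs B \<Longrightarrow> P x \<Longrightarrow> b \<in> B \<Longrightarrow> P (x + b)"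
    "\<And>x b. x \<in> zs B \<Longrightarrow> P x \<Longrightarrow> b \<in> B \<Longrightarrow> P (x - b)"
  shows "P x"
  using assms(1)
proof (induction rule: zs.induct)
  case z0 thus ?case using assms(2) by (simp add: zero_fun_def)
next
  case (zp x b) thus ?case using assms(3)[of x b] by (simp add: plus_fun_def)
next
  case (zm x b) thus ?case using assms(4)[of x b] by (simp add: fun_diff_def)
qed

lemma zs_mono: "x \<in> zs B \<Longrightarrow> B \<subseteq> C \<Longrightarrow> x \<in> zs C"
  by (induction rule: zs_induct) (auto intro: zs_zero zs_add zs_sub)

lemma zs_smul: assumes "x \<in> zs B" "b \<in> B" shows "x + smul c b \<in> zs B"
proof (induction c rule: int_induct[where k=0])
  case base
  have "smul 0 b = 0" by (simp add: smul_def fun_eq_iff)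
  thus ?case using assms by simp
next
  case (step1 i)
  have "x + smul (i+1) b = (x + smul i b) + b" by (simp add: smul_plus1 add.assoc)
  thus ?case using step1 assms zs_add by metis
next
  case (step2 i)
  have "x + smul (i - 1) b = (x + smul i b) - b" by (simp add: smul_minus1 add_diff_eq)
  thus ?case using step2 assms zs_sub by metis
qed

lemma zs_vec: "x \<in> zs B \<Longrightarrow> (\<And>b. b \<in> B \<Longrightarrow> vec n b) \<Longrightarrow> vec n x"
  by (induction rule: zs_induct) (auto intro: vec_add vec_diff)

lemma zs_ker: assumes "x \<in> zs B" "lin n m f" "\<And>b. b \<in> B \<Longrightarrow> vec n b \<and> f b = 0" shows "f x = 0"
  using assms(1)
proof (induction rule: zs_induct)
  case z0 show ?case by (rule lin_zero[OF assms(2)])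
next
  case (zp x b)
  have "f (x + b) = f x + f b" using lin_add[OF assms(2) zs_vec[OF zp.hyps(1)]] assms(3) zp by blast
  thus ?case using zp.IH assms(3)[OF zp.hyps(2)] by (metis add.right_neutral)
next
  case (zm x b)
  have "f (x - b) = f x - f b" using lin_diff[OF assms(2) zs_vec[OF zm.hyps(1)]] assms(3) zm by blast
  thus ?case using zm.IH assms(3)[OF zm.hyps(2)] by (metis diff_zero)
qed

definition rs :: "real \<Rightarrow> (nat \<Rightarrow> real) \<Rightarrow> (nat \<Rightarrow> real)" where
  "rs = (\<lambda>c v i. c * v i)"

interpretation RV: vector_space "\<lambda>(c::real) (v::nat \<Rightarrow> real) i. c * v i"
  by unfold_locales (auto simp: fun_eq_iff algebra_simps)

definition emb :: "(nat \<Rightarrow> int) \<Rightarrow> (nat \<Rightarrow> real)" where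
  "emb x = (\<lambda>i. real_of_int (x i))"

lemma emb_add: "emb (x + y) = emb x + emb y" by (simp add: emb_def fun_eq_iff)
lemma emb_diff: "emb (x - y) = emb x - emb y" by (simp add: emb_def fun_eq_iff)
lemma emb_smul: "emb (smul c x) = (\<lambda>i. real_of_int c * emb x i)" by (simp add: emb_def smul_def fun_eq_iff)
lemma emb_inj: "inj emb" by (auto simp: inj_def emb_def fun_eq_iff)
lemma emb_zero: "emb 0 = 0" by (simp add: emb_def fun_eq_iff)

lemma zs_span: "x \<in> zs B \<Longrightarrow> emb x \<in> RV.span (emb ` B)"
proof (induction rule: zs_induct)
  case z0 show ?case unfolding emb_zero by (rule RV.span_zero)
next
  case (zp x b) thus ?case unfolding emb_add by (intro RV.span_add[OF zp.IH] RV.span_base imageI)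
next
  case (zm x b) thus ?case unfolding emb_diff by (intro RV.span_diff[OF zm.IH] RV.span_base imageI)
qed

lemma lin_decomp: assumes "lin n m f" "vec n x"
  shows "f x = (\<Sum>i<n. smul (x i) (f (ee i)))"
proof -
  define tr where "tr k = (\<lambda>i. if i < k then x i else 0)" for k
  have "k \<le> n \<Longrightarrow> f (tr k) = (\<Sum>i<k. smul (x i) (f (ee i)))" for k
  proof (induction k)
    case 0
    have "tr 0 = 0" by (simp add: tr_def fun_eq_iff)
    thus ?case using lin_zero[OF assms(1)] by (simp only: lessThan_0 sum.empty)
  next
    case (Suc k)
    have e: "tr (Suc k) = tr k + smul (x k) (ee k)" by (auto simp: tr_def smul_def ee_def fun_eq_iff less_Suc_eq)
    have v1: "vec n (tr k)" using Suc.prems by (auto simp: tr_def vec_def)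
    have v2: "vec n (ee k)" using Suc.prems by (simp add: vec_ee)
    have "f (tr (Suc k)) = f (tr k) + smul (x k) (f (ee k))"
      unfolding e lin_add[OF assms(1) v1 vec_smul[OF v2]] lin_smul[OF assms(1) v2] ..
    thus ?case using Suc by simp
  qed
  moreover have "tr n = x" using assms(2) by (auto simp: tr_def vec_def fun_eq_iff)
  ultimately show ?thesis by (metis order_refl)
qed

lemma sum_fun_apply: "(\<Sum>i\<in>A. (g i :: nat \<Rightarrow> int)) k = (\<Sum>i\<in>A. g i k)"
  by (induction A rule: infinite_finite_induct) auto

(* functional: if lin n m f, coordinate 0 of f extends to a real linear functional *)
lemma functional_span:
  assumes "lin n m f" "\<forall>b\<in>B. vec n b \<and> f b 0 = 0" "vec n x" "f x 0 \<noteq> 0"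
  shows "emb x \<notin> RV.span (emb ` B)"
proof
  define F where "F y = (\<Sum>i<n. y i * real_of_int (f (ee i) 0))" for y :: "nat \<Rightarrow> real"
  have Femb: "vec n z \<Longrightarrow> F (emb z) = real_of_int (f z 0)" for z
    using lin_decomp[OF assms(1), of z] by (simp add: F_def emb_def sum_fun_apply smul_def)
  assume "emb x \<in> RV.span (emb ` B)"
  hence "F (emb x) = 0"
  proof (induction rule: RV.span_induct_alt)
    case base thus ?case by (simp add: F_def)
  next
    case (step c x y)
    then obtain b where "b \<in> B" "x = emb b" by auto
    hence "F x = 0" using Femb assms(2) by simp
    have "F (\<lambda>i. c * x i + y i) = c * F x + F y"
      by (simp add: F_def sum.distrib sum_distrib_left algebra_simps)
    thus ?case using step \<open>F x = 0\<close> by (simp add: plus_fun_def)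
  qed
  thus False using Femb[OF assms(3)] assms(4) by simp
qed



definition st :: "nat \<Rightarrow> (nat \<Rightarrow> int) list \<Rightarrow> (nat \<Rightarrow> int) list \<Rightarrow> ((nat \<Rightarrow> int) \<Rightarrow> (nat \<Rightarrow> int)) \<Rightarrow> nat \<Rightarrow> bool" where
  "st n as bs \<pi> m \<longleftrightarrow> lin n m \<pi> \<and> (\<forall>y. vec m y \<longrightarrow> (\<exists>x. vec n x \<and> \<pi> x = y)) \<and>
     (\<forall>x. vec n x \<longrightarrow> \<pi> x = 0 \<longrightarrow> x \<in> zs (set bs)) \<and> (\<forall>b\<in>set bs. vec n b \<and> \<pi> b = 0) \<and>
     m + length bs = n \<and> (\<forall>a\<in>set as. \<pi> a = 0) \<and> distinct bs \<and> RV.independent (emb ` set bs) \<and>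
     RV.span (emb ` set bs) = RV.span (emb ` set as)"

lemma st_base: "st n [] [] id n"
  by (auto simp: st_def lin_def RV.independent_empty zs_zero)

lemma st_step:
  assumes st: "st n as bs \<pi> m" and a: "vec n a"
  shows "\<exists>bs' \<pi>' m'. st n (a # as) bs' \<pi>' m'"
proof -
  note S = st[unfolded st_def]
  have lin: "lin n m \<pi>" and surj: "\<And>y. vec m y \<Longrightarrow> \<exists>x. vec n x \<and> \<pi> x = y"
    and ker: "\<And>x. vec n x \<Longrightarrow> \<pi> x = 0 \<Longrightarrow> x \<in> zs (set bs)"
    and bsk: "\<And>b. b \<in> set bs \<Longrightarrow> vec n b \<and> \<pi> b = 0"
    and cnt: "m + length bs = n" and ask: "\<And>a. a \<in> set as \<Longrightarrow> \<pi> a = 0"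
    and dist: "distinct bs" and ind: "RV.independent (emb ` set bs)"
    and sp: "RV.span (emb ` set bs) = RV.span (emb ` set as)"
    using S by auto
  have zspan: "x \<in> zs (set bs) \<Longrightarrow> emb x \<in> RV.span (emb ` set as)" for x
    using zs_span[of x "set bs"] sp by simp
  define v where "v = \<pi> a"
  have vv: "vec m v" using lin a by (simp add: v_def lin_vec)
  show ?thesis
  proof (cases "v = 0")
    case True
    have "emb a \<in> RV.span (emb ` set as)" using zspan ker[OF a] True v_def by simp
    hence "RV.span (emb ` set (a # as)) = RV.span (emb ` set as)" by (simp add: RV.span_redundant)
    hence "st n (a # as) bs \<pi> m" using S True v_def by (auto simp: st_def)
    thus ?thesis by blast
  next
    case False
    define c where "c = Gcd (range v)"
    have c0: "c \<noteq> 0" using False by (auto simp: c_def fun_eq_iff)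
    define u where "u = (\<lambda>i. v i div c)"
    have cdv: "c dvd v i" for i by (simp add: c_def Gcd_dvd)
    have vu: "v = smul c u" using cdv by (simp add: u_def smul_def fun_eq_iff)
    have pu: "prim m u"
    proof -
      have "vec m u" using vv by (simp add: vec_def u_def)
      moreover have "is_unit d" if d: "\<forall>i. d dvd u i" for d
      proof -
        have "d * c dvd v i" for i using d vu by (simp add: smul_def mult_dvd_mono mult.commute)
        hence "d * c dvd c" unfolding c_def by (intro Gcd_greatest) auto
        thus ?thesis using c0 by (metis dvd_mult_cancel_right mult_1 mult.commute)
      qed
      ultimately show ?thesis by (simp add: prim_def)
    qed
    obtain U where U: "good m U" "U u = ee 0" using prim_reduce[OF pu] by blast
    have Ulin: "lin m m U" and Ubij: "bij_betw U {x. vec m x} {x. vec m x}" using U by (auto simp: good_def)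
    obtain i0 where "i0 < m" using prim_exists_nz[OF pu] by blast
    hence m1: "m \<ge> 1" by simp
    obtain b where b: "vec n b" "\<pi> b = u" using surj pu by (auto simp: prim_def)
    define m' where "m' = m - 1"
    define \<pi>' where "\<pi>' x = (\<lambda>i. U (\<pi> x) (Suc i))" for x
    have lin': "lin n m' \<pi>'"
      unfolding lin_def
    proof (intro conjI allI impI)
      fix x assume "vec n x"
      hence "vec m (U (\<pi> x))" using lin Ulin by (simp add: lin_vec)
      thus "vec m' (\<pi>' x)" using m1 by (auto simp: vec_def \<pi>'_def m'_def)
    next
      fix x y assume xy: "vec n x" "vec n y"
      have "U (\<pi> (x + y)) = U (\<pi> x) + U (\<pi> y)"
        using lin_add[OF Ulin lin_vec[OF lin xy(1)] lin_vec[OF lin xy(2)]] lin_add[OF lin xy] by metis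
      thus "\<pi>' (x + y) = \<pi>' x + \<pi>' y" by (simp add: \<pi>'_def fun_eq_iff)
    qed
    have surj': "\<exists>x. vec n x \<and> \<pi>' x = y" if y: "vec m' y" for y
    proof -
      define z where "z = (\<lambda>i. if i = 0 then 0 else y (i - 1))"
      have "vec m z" using y m1 by (auto simp: z_def vec_def m'_def)
      hence "z \<in> U ` {x. vec m x}" using Ubij by (simp add: bij_betw_def)
      then obtain w where w: "vec m w" "U w = z" by blast
      obtain x where x: "vec n x" "\<pi> x = w" using surj w(1) by blast
      have "\<pi>' x = y" unfolding \<pi>'_def x(2) w(2) z_def by simp
      thus ?thesis using x by blast
    qed
    have Uinj: "vec m p \<Longrightarrow> vec m q \<Longrightarrow> U p = U q \<Longrightarrow> p = q" for p q
      using Ubij by (auto simp: bij_betw_def inj_on_def)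
    have ker': "x \<in> zs (set (bs @ [b]))" if x: "vec n x" "\<pi>' x = 0" for x
    proof -
      define w where "w = \<pi> x"
      have wv: "vec m w" using lin x by (simp add: w_def lin_vec)
      define k where "k = U w 0"
      have h: "U w (Suc i) = 0" for i
        using fun_cong[OF x(2), of i] unfolding \<pi>'_def w_def by simp
      have "U w = smul k (ee 0)"
      proof
        fix j show "U w j = smul k (ee 0) j"
          using h[of "j - 1"] by (cases j) (auto simp: k_def smul_def ee_def)
      qed
      also have "\<dots> = U (smul k u)" using lin_smul[OF Ulin, of u k] pu U by (simp add: prim_def)
      finally have "w = smul k u" using Uinj wv pu by (meson prim_def vec_smul)
      hence "\<pi> (x - smul k b) = 0" using lin_diff[OF lin x(1) vec_smul[OF b(1)]] lin_smul[OF lin b(1)] b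
        by (simp add: w_def)
      hence "x - smul k b \<in> zs (set bs)" using ker x b by (simp add: vec_diff vec_smul)
      hence "x - smul k b \<in> zs (set (bs @ [b]))" by (rule zs_mono) auto
      hence "(x - smul k b) + smul k b \<in> zs (set (bs @ [b]))" by (rule zs_smul) simp
      thus ?thesis by simp
    qed
    have U0: "U 0 = 0" by (rule lin_zero[OF Ulin])
    have pi0: "\<pi>' y = 0" if "\<pi> y = 0" for y unfolding \<pi>'_def that U0 by (simp add: zero_fun_def)
    have bk': "\<pi>' b = 0" unfolding \<pi>'_def b(2) U(2) by (simp add: ee_def zero_fun_def)
    have ak': "\<pi>' a = 0"
    proof -
      have "U (\<pi> a) = smul c (U u)" using vu v_def lin_smul[OF Ulin, of u c] pu by (simp add: prim_def)
      thus ?thesis using U by (simp add: \<pi>'_def smul_def ee_def fun_eq_iff)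
    qed
    have bnot: "b \<notin> set bs"
    proof
      assume "b \<in> set bs"
      hence "u = 0" using bsk b by simp
      thus False using prim_exists_nz[OF pu] by (auto simp: fun_eq_iff)
    qed
    have nspan: "emb b \<notin> RV.span (emb ` set bs)"
    proof (rule functional_span[where f="U \<circ> \<pi>"])
      show "lin n m (U \<circ> \<pi>)" using lin_comp[OF lin Ulin] .
      show "\<forall>b'\<in>set bs. vec n b' \<and> (U \<circ> \<pi>) b' 0 = 0" using bsk U0 by simp
      show "vec n b" by fact
      show "(U \<circ> \<pi>) b 0 \<noteq> 0" using b U by (simp add: ee_def)
    qed
    have ind': "RV.independent (emb ` set (bs @ [b]))"
      using ind nspan RV.independent_insert[of "emb b" "emb ` set bs"] by (auto simp: RV.independent_insertI)
    have sp': "RV.span (emb ` set (bs @ [b])) = RV.span (emb ` set (a # as))"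
    proof (subst RV.span_eq, intro conjI)
      have spas: "RV.span (emb ` set as) \<subseteq> RV.span (emb ` set (a # as))" by (intro RV.span_mono) auto
      have "emb (smul c b - a) \<in> RV.span (emb ` set as)"
      proof (rule zspan, rule ker)
        show "vec n (smul c b - a)" using b a by (simp add: vec_diff vec_smul)
        show "\<pi> (smul c b - a) = 0"
          using lin_diff[OF lin vec_smul[OF b(1)] a] lin_smul[OF lin b(1)] b vu v_def by simp
      qed
      moreover have "emb a \<in> RV.span (emb ` set (a # as))" by (rule RV.span_base) simp
      ultimately have "emb (smul c b - a) + emb a \<in> RV.span (emb ` set (a # as))"
        using spas by (intro RV.span_add) blast+
      moreover have "emb (smul c b - a) + emb a = emb (smul c b)"
        unfolding emb_add[symmetric] by simp
      ultimately have "emb (smul c b) \<in> RV.span (emb ` set (a # as))" by simp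
      hence "(\<lambda>i. (1 / real_of_int c) * emb (smul c b) i) \<in> RV.span (emb ` set (a # as))"
        by (rule RV.span_scale)
      moreover have "(\<lambda>i. (1 / real_of_int c) * emb (smul c b) i) = emb b"
        using c0 by (simp add: emb_smul fun_eq_iff)
      ultimately have "emb b \<in> RV.span (emb ` set (a # as))" by simp
      moreover have "emb ` set bs \<subseteq> RV.span (emb ` set (a # as))"
        using sp spas RV.span_superset[of "emb ` set bs"] by (simp only:)
      ultimately show "emb ` set (bs @ [b]) \<subseteq> RV.span (emb ` set (a # as))" by auto
      have "emb a \<in> RV.span (emb ` set (bs @ [b]))"
        using zs_span[OF ker'[OF a ak']] by simp
      moreover have "emb ` set as \<subseteq> RV.span (emb ` set (bs @ [b]))"
      proof -
        have "emb ` set as \<subseteq> RV.span (emb ` set bs)" using sp RV.span_superset[of "emb ` set as"] by (simp only:)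
        also have "\<dots> \<subseteq> RV.span (emb ` set (bs @ [b]))" by (rule RV.span_mono) auto
        finally show ?thesis .
      qed
      ultimately show "emb ` set (a # as) \<subseteq> RV.span (emb ` set (bs @ [b]))" by auto
    qed
    have "st n (a # as) (bs @ [b]) \<pi>' m'"
      unfolding st_def
    proof (intro conjI allI impI ballI)
      show "lin n m' \<pi>'" by fact
      show "\<And>y. vec m' y \<Longrightarrow> \<exists>x. vec n x \<and> \<pi>' x = y" by (rule surj')
      show "\<And>x. vec n x \<Longrightarrow> \<pi>' x = 0 \<Longrightarrow> x \<in> zs (set (bs @ [b]))" by (rule ker')
      show "\<And>b'. b' \<in> set (bs @ [b]) \<Longrightarrow> vec n b'" using bsk b by auto
      show "\<And>b'. b' \<in> set (bs @ [b]) \<Longrightarrow> \<pi>' b' = 0" using bsk bk' pi0 by auto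
      show "m' + length (bs @ [b]) = n" using cnt m1 by (simp add: m'_def)
      show "\<And>a'. a' \<in> set (a # as) \<Longrightarrow> \<pi>' a' = 0" using ask ak' pi0 by auto
      show "distinct (bs @ [b])" using dist bnot by simp
      show "RV.independent (emb ` set (bs @ [b]))" by fact
      show "RV.span (emb ` set (bs @ [b])) = RV.span (emb ` set (a # as))" by fact
    qed
    thus ?thesis by blast
  qed
qed

lemma st_exists: "(\<forall>a\<in>set as. vec n a) \<Longrightarrow> \<exists>bs \<pi> m. st n as bs \<pi> m"
proof (induction as)
  case Nil thus ?case using st_base by blast
next
  case (Cons a as) thus ?case using st_step by (metis list.set_intros)
qed

lemma st_dim: assumes "st n as bs \<pi> m" shows "length bs = RV.dim (emb ` set as)"
proof -
  have "length bs = card (set bs)" using assms by (simp add: st_def distinct_card)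
  also have "\<dots> = card (emb ` set bs)" using emb_inj by (simp add: card_image inj_on_def inj_def)
  also have "\<dots> = RV.dim (emb ` set bs)" using assms by (simp add: st_def RV.dim_eq_card_independent)
  also have "\<dots> = RV.dim (RV.span (emb ` set bs))" by simp
  also have "\<dots> = RV.dim (emb ` set as)" using assms by (simp add: st_def)
  finally show ?thesis .
qed



theorem mainTheorem15:
  fixes S S' :: "'a set" and R :: "'a word list" and n :: nat
    and \<phi> :: "'a word set \<Rightarrow> (nat \<Rightarrow> int)"
  assumes "three_presentation S R"
    and "\<phi> \<in> iso (presented_group S (set R)) (Zn n)"
    and "S' \<subseteq> S"
  shows "\<exists>ws :: 'a word list.
           length ws = gen_dim S (set R) \<phi> S' \<and> (\<forall>w\<in>set ws. word_on S w) \<and>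
           (let R'' = map (delete_gens S') (R @ ws) in
              presented_group (S - S') (set R'') \<cong> Zn (n - gen_dim S (set R) \<phi> S') \<and>
              length R'' = length R + gen_dim S (set R) \<phi> S')"
proof -
  define G where "G = presented_group S (set R)"
  have hom: "\<phi> \<in> hom G (Zn n)" and bij: "bij_betw \<phi> (carrier G) (carrier (Zn n))"
    using assms(2) by (auto simp: iso_def G_def)
  have finS: "finite S" and Rw: "\<And>r. r \<in> set R \<Longrightarrow> word_on S r"
    using assms(1) by (auto simp: three_presentation_def)
  define h where "h = (\<lambda>g. \<phi> (gen S (set R) g))"
  have pev: "word_on S w \<Longrightarrow> \<phi> (pclass S (set R) w) = ev h w" for w
    using phi_ev[OF hom[unfolded G_def]] by (simp add: h_def)
  have pvec: "word_on S w \<Longrightarrow> vec n (\<phi> (pclass S (set R) w))" for w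
    using phi_vec[OF hom[unfolded G_def]] by simp
  have hvec: "g \<in> S \<Longrightarrow> vec n (h g)" for g
    using pvec[of "[(g,1)]"] by (simp add: h_def gen_def)
  have papp: "word_on S u \<Longrightarrow> word_on S v \<Longrightarrow>
     \<phi> (pclass S (set R) (u @ v)) = \<phi> (pclass S (set R) u) + \<phi> (pclass S (set R) v)" for u v
    using phi_app[OF hom[unfolded G_def]] by simp
  have finS': "finite S'" using assms(3) finS finite_subset by blast
  obtain as where as: "set as = h ` S'" using finite_list[of "h ` S'"] finS' by blast
  have asv: "\<forall>a\<in>set as. vec n a" using as hvec assms(3) by auto
  obtain bs \<pi> m where st: "st n as bs \<pi> m" using st_exists[OF asv] by blast
  note S = st[unfolded st_def]
  have lin: "lin n m \<pi>" and surj: "\<And>y. vec m y \<Longrightarrow> \<exists>x. vec n x \<and> \<pi> x = y"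
    and ker: "\<And>x. vec n x \<Longrightarrow> \<pi> x = 0 \<Longrightarrow> x \<in> zs (set bs)"
    and bsk: "\<And>b. b \<in> set bs \<Longrightarrow> vec n b \<and> \<pi> b = 0"
    and cnt: "m + length bs = n" and ask: "\<And>a. a \<in> set as \<Longrightarrow> \<pi> a = 0"
    using S by auto
  define d where "d = gen_dim S (set R) \<phi> S'"
  have "d = RV.dim (emb ` set as)"
    unfolding d_def gen_dim_def as image_image by (simp add: emb_def h_def)
  hence dlen: "d = length bs" using st_dim[OF st] by simp
  have mnd: "m = n - d" using cnt dlen by simp
  have exw: "\<exists>w. word_on S w \<and> \<phi> (pclass S (set R) w) = b" if "vec n b" for b
  proof -
    have "b \<in> \<phi> ` carrier G" using bij that by (simp add: bij_betw_def carrier_Zn)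
    then obtain Z0 where Z0: "Z0 \<in> carrier G" "\<phi> Z0 = b" by blast
    hence "Z0 \<in> pclass S (set R) ` {w. word_on S w}" by (simp add: G_def presented_group_def)
    then obtain w where "word_on S w" "Z0 = pclass S (set R) w" by blast
    thus ?thesis using Z0 by blast
  qed
  define wf where "wf b = (SOME w. word_on S w \<and> \<phi> (pclass S (set R) w) = b)" for b
  have wf: "word_on S (wf b) \<and> \<phi> (pclass S (set R) (wf b)) = b" if "b \<in> set bs" for b
    using someI_ex[OF exw[OF conjunct1[OF bsk[OF that]]]] unfolding wf_def .
  define ws where "ws = map wf bs"
  define T where "T = S - S'"
  define R2 where "R2 = set (map (delete_gens S') (R @ ws))"
  have R2eq: "R2 = delete_gens S' ` (set R \<union> set ws)" by (simp add: R2_def image_Un)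
  define k where "k = (\<lambda>g. \<pi> (h g))"
  have kz: "g \<in> S' \<Longrightarrow> k g = 0" for g using ask as by (simp add: k_def)
  have kvec: "g \<in> S \<Longrightarrow> vec m (k g)" for g using hvec lin by (simp add: k_def lin_vec)
  have evpi: "word_on S w \<Longrightarrow> \<pi> (ev h w) = ev k w" for w
  proof (induction w)
    case Nil show ?case unfolding ev_nil by (rule lin_zero[OF lin])
  next
    case (Cons x w)
    obtain g a where x: "x = (g,a)" by fastforce
    have g: "g \<in> S" "word_on S w" using Cons x by auto
    have "\<pi> (smul a (h g) + ev h w) = \<pi> (smul a (h g)) + \<pi> (ev h w)"
      using lin_add[OF lin vec_smul[OF hvec[OF g(1)]] ev_vec_on[OF g(2) hvec]] .
    also have "\<dots> = smul a (k g) + ev k w"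
      using lin_smul[OF lin hvec[OF g(1)]] Cons g by (simp add: k_def)
    finally show ?case unfolding x ev_cons .
  qed
  have R2rel: "ev k r = 0" if rR2: "r \<in> R2" for r
  proof -
    obtain r0 where r0: "r = delete_gens S' r0" "r0 \<in> set R \<union> set ws" using rR2 R2eq by auto
    have w0: "word_on S r0" using r0 Rw wf by (auto simp: ws_def)
    have "ev k r = ev k r0" using r0(1) kz ev_del by metis
    also have "\<dots> = \<pi> (\<phi> (pclass S (set R) r0))" using evpi[OF w0] pev[OF w0] by simp
    also have "\<dots> = 0"
    proof (cases "r0 \<in> set R")
      case True
      have "pclass S (set R) r0 = pclass S (set R) []"
        using pclass_eq_iff[OF w0] rel_trivial[OF True w0] by blast
      thus ?thesis using phi_nil[OF hom[unfolded G_def]] lin_zero[OF lin] by simp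
    next
      case False
      then obtain b where "b \<in> set bs" "r0 = wf b" using r0 by (auto simp: ws_def)
      thus ?thesis using wf bsk by simp
    qed
    finally show ?thesis .
  qed
  have wd: "pres_eq T R2 u v \<Longrightarrow> ev k u = ev k v" for u v
  proof (induction rule: pres_eq.induct)
    case (zero u v g) thus ?case by (simp add: smul_def)
  next
    case (merge u v g a b) thus ?case by (simp add: smul_def add.assoc[symmetric] distrib_right)
  next
    case (rel u v r) thus ?case using R2rel by simp
  qed auto
  define G2 where "G2 = presented_group T R2"
  define \<Theta> where "\<Theta> XX = ev k (SOME w. w \<in> XX)" for XX
  have thpc: "\<Theta> (pclass T R2 u) = ev k u" if "word_on T u" for u
  proof -
    have "u \<in> pclass T R2 u" using that by (simp add: pclass_def pres_eq.refl)
    hence "(SOME w. w \<in> pclass T R2 u) \<in> pclass T R2 u" by (rule someI)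
    thus ?thesis using wd by (auto simp: \<Theta>_def pclass_def)
  qed
  have TS: "word_on T u \<Longrightarrow> word_on S u" for u by (auto simp: word_on_def T_def)
  have carG2: "carrier G2 = pclass T R2 ` {w. word_on T w}" by (simp add: G2_def presented_group_def)
  have Th_vec: "vec m (\<Theta> XX)" if XXc: "XX \<in> carrier G2" for XX
  proof -
    obtain u where "word_on T u" "XX = pclass T R2 u" using XXc carG2 by auto
    thus ?thesis using thpc ev_vec_on[OF TS kvec] by simp
  qed
  have homT: "\<Theta> \<in> hom G2 (Zn m)"
  proof (unfold hom_def, intro CollectI conjI ballI)
    show "\<Theta> \<in> carrier G2 \<rightarrow> carrier (Zn m)" using Th_vec by (auto simp: carrier_Zn)
  next
    fix XX YY assume XY: "XX \<in> carrier G2" "YY \<in> carrier G2"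
    obtain u where u: "word_on T u" "XX = pclass T R2 u" using XY carG2 by auto
    obtain v where v: "word_on T v" "YY = pclass T R2 v" using XY carG2 by auto
    have "XX \<otimes>\<^bsub>G2\<^esub> YY = pclass T R2 (u @ v)" using u v pclass_mult by (simp add: G2_def)
    thus "\<Theta> (XX \<otimes>\<^bsub>G2\<^esub> YY) = \<Theta> XX \<otimes>\<^bsub>Zn m\<^esub> \<Theta> YY" using u v thpc by (simp add: mult_Zn)
  qed
  have real: "\<exists>W. word_on S W \<and> \<phi> (pclass S (set R) W) = x \<and> pres_eq T R2 (delete_gens S' W) []"
    if "x \<in> zs (set bs)" for x
    using that
  proof (induction rule: zs_induct)
    case z0 show ?case using phi_nil[OF hom[unfolded G_def]] by (intro exI[of _ "[]"]) (simp add: pres_eq.refl)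
  next
    case (zp x b)
    obtain W where W: "word_on S W" "\<phi> (pclass S (set R) W) = x" "pres_eq T R2 (delete_gens S' W) []"
      using zp by blast
    have wb: "word_on S (wf b)" "\<phi> (pclass S (set R) (wf b)) = b" using wf zp by auto
    have "delete_gens S' (wf b) \<in> R2" using zp R2eq by (auto simp: ws_def)
    moreover have "word_on T (delete_gens S' (wf b))" using del_word_on[OF wb(1)] by (simp add: T_def)
    ultimately have "pres_eq T R2 (delete_gens S' (wf b)) []" by (rule rel_trivial)
    hence "pres_eq T R2 (delete_gens S' (W @ wf b)) ([] @ [])" using pres_eq_app[OF W(3)] by simp
    moreover have "\<phi> (pclass S (set R) (W @ wf b)) = x + b" using papp W wb by simp
    ultimately show ?case using W wb by (intro exI[of _ "W @ wf b"]) simp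
  next
    case (zm x b)
    obtain W where W: "word_on S W" "\<phi> (pclass S (set R) W) = x" "pres_eq T R2 (delete_gens S' W) []"
      using zm by blast
    have wb: "word_on S (wf b)" "\<phi> (pclass S (set R) (wf b)) = b" using wf zm by auto
    have "delete_gens S' (wf b) \<in> R2" using zm R2eq by (auto simp: ws_def)
    moreover have "word_on T (delete_gens S' (wf b))" using del_word_on[OF wb(1)] by (simp add: T_def)
    ultimately have "pres_eq T R2 (winv (delete_gens S' (wf b))) []" by (rule rel_inv_trivial)
    hence "pres_eq T R2 (delete_gens S' (W @ winv (wf b))) ([] @ [])"
      using pres_eq_app[OF W(3)] by (simp add: del_winv)
    moreover have "\<phi> (pclass S (set R) (winv (wf b))) = - b"
      using pev wb by (simp add: ev_winv)
    hence "\<phi> (pclass S (set R) (W @ winv (wf b))) = x - b" using papp W wb by simp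
    ultimately show ?case using W wb by (intro exI[of _ "W @ winv (wf b)"]) simp
  qed
  have phiinj: "inj_on \<phi> (carrier G)" using bij by (simp add: bij_betw_def)
  have injT: "inj_on \<Theta> (carrier G2)"
  proof (rule inj_onI)
    fix XX YY assume XY: "XX \<in> carrier G2" "YY \<in> carrier G2" and eq: "\<Theta> XX = \<Theta> YY"
    obtain u where u: "word_on T u" "XX = pclass T R2 u" using XY carG2 by auto
    obtain v where v: "word_on T v" "YY = pclass T R2 v" using XY carG2 by auto
    have uS: "word_on S u" and vS: "word_on S v" using u v TS by auto
    have evu: "vec n (ev h u)" using ev_vec_on[of S u n h] uS hvec by blast
    have evv: "vec n (ev h v)" using ev_vec_on[of S v n h] vS hvec by blast
    have "ev k u = ev k v" using eq u v thpc by simp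
    hence "\<pi> (ev h u) = \<pi> (ev h v)" using evpi uS vS by simp
    hence "\<pi> (ev h u - ev h v) = 0" using lin_diff[OF lin evu evv] by simp
    hence "ev h u - ev h v \<in> zs (set bs)" using ker vec_diff[OF evu evv] by blast
    then obtain W where W: "word_on S W" "\<phi> (pclass S (set R) W) = ev h u - ev h v"
      "pres_eq T R2 (delete_gens S' W) []" using real by blast
    have "\<phi> (pclass S (set R) (v @ W)) = \<phi> (pclass S (set R) u)"
      using papp[OF vS W(1)] W(2) pev uS vS by simp
    hence "pclass S (set R) (v @ W) = pclass S (set R) u"
      using phiinj pclass_carrier[of S "v @ W" "set R"] pclass_carrier[of S u "set R"] vS W(1) uS
      by (simp add: G_def inj_on_def)
    hence "pres_eq S (set R) u (v @ W)" using pclass_eq_iff[OF uS] by metis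
    hence "pres_eq T (delete_gens S' ` set R) (delete_gens S' u) (delete_gens S' (v @ W))"
      using pres_eq_del unfolding T_def by blast
    hence "pres_eq T R2 u (v @ delete_gens S' W)"
      using del_id[of S S' u] del_id[of S S' v] u v R2eq pres_eq_mono unfolding T_def
      by (metis del_append sup.cobounded1 image_mono)
    moreover have "pres_eq T R2 (v @ delete_gens S' W) (v @ [])" by (rule pres_eq_app_left[OF W(3) v(1)])
    ultimately have "pres_eq T R2 u v" using pres_eq.trans by fastforce
    thus "XX = YY" using u v pclass_eq_iff by metis
  qed
  have surjT: "\<Theta> ` carrier G2 = carrier (Zn m)"
  proof
    show "\<Theta> ` carrier G2 \<subseteq> carrier (Zn m)" using Th_vec by (auto simp: carrier_Zn)
  next
    show "carrier (Zn m) \<subseteq> \<Theta> ` carrier G2"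
    proof
      fix y assume "y \<in> carrier (Zn m)"
      then obtain x where x: "vec n x" "\<pi> x = y" using surj by (auto simp: carrier_Zn)
      then obtain w where w: "word_on S w" "\<phi> (pclass S (set R) w) = x" using exw by blast
      have wT: "word_on T (delete_gens S' w)" using del_word_on[OF w(1)] by (simp add: T_def)
      have "\<Theta> (pclass T R2 (delete_gens S' w)) = ev k (delete_gens S' w)" using thpc[OF wT] .
      also have "\<dots> = ev k w" using ev_del kz by metis
      also have "\<dots> = y" using evpi[OF w(1)] pev[OF w(1)] w x by simp
      finally show "y \<in> \<Theta> ` carrier G2" using wT carG2 by (metis image_eqI mem_Collect_eq)
    qed
  qed
  have "\<Theta> \<in> iso G2 (Zn m)" using homT injT surjT by (auto simp: iso_def bij_betw_def)
  hence iso2: "G2 \<cong> Zn m" by (rule is_isoI)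
  show ?thesis
  proof (intro exI[of _ ws] conjI)
    show "length ws = gen_dim S (set R) \<phi> S'" using dlen by (simp add: ws_def d_def)
    show "\<forall>w\<in>set ws. word_on S w" using wf by (auto simp: ws_def)
    show "let R'' = map (delete_gens S') (R @ ws) in
      presented_group (S - S') (set R'') \<cong> Zn (n - gen_dim S (set R) \<phi> S') \<and>
      length R'' = length R + gen_dim S (set R) \<phi> S'"
      using iso2 mnd dlen by (simp add: G2_def T_def R2_def d_def ws_def Let_def)
  qed
qed


end
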